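(* Let $G=(V,E)$ be a graph and consider a routing game on $G$ with players $\pi_1,\dots,\pi_N$, player $\pi_i$ having a strategy set $\mathcal{P}_i$ of paths from $u_i$ to $v_i$, and player cost $\widetilde C_i(\mathbf{p})=\sum_{e\in p_i}2^{C_e(\mathbf{p})}$. If in routing $\mathbf{p}$ a player $\pi_i$ performs a greedy move, producing routing $\mathbf{p}'$, then $\widetilde C_E(\mathbf{p})>\widetilde C_E(\mathbf{p}')$, where $\widetilde C_E(\mathbf{q})=\sum_{e\in E}2^{C_e(\mathbf{q})}$.
   Context: A routing is $\mathbf{p}=[p_1,\dots,p_N]$ with $p_i\in\mathcal{P}_i$; $C_e(\mathbf{p})$ is the number of paths of $\mathbf{p}$ that use edge $e$. A greedy move by player $\pi_i$ in $\mathbf{p}$ is a change of its path from $p_i$ to some $p_i'\in\mathcal{P}_i$ such that $\widetilde C_i(\mathbf{p})>\widetilde C_i(p_i';\mathbf{p}_{-i})$, where $(p_i';\mathbf{p}_{-i})$ denotes the routing obtained from $\mathbf{p}$ by replacing $p_i$ with $p_i'$; the resulting routing is $\mathbf{p}'=(p_i';\mathbf{p}_{-i})$. *)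

theory Defs
  imports Main
begin

definition graph :: "'v set \<Rightarrow> 'v set set \<Rightarrow> bool" where
  "graph V E \<longleftrightarrow> finite V \<and> (\<forall>e\<in>E. card e = 2 \<and> e \<subseteq> V)"

definition path_edges :: "'v list \<Rightarrow> 'v set set" where
  "path_edges xs = {{xs ! k, xs ! Suc k} | k. Suc k < length xs}"

definition is_path :: "'v set \<Rightarrow> 'v set set \<Rightarrow> 'v \<Rightarrow> 'v \<Rightarrow> 'v list \<Rightarrow> bool" where
  "is_path V E u v xs \<longleftrightarrow> xs \<noteq> [] \<and> hd xs = u \<and> last xs = v \<and> distinct xs
     \<and> set xs \<subseteq> V \<and> path_edges xs \<subseteq> E"

definition congestion :: "nat \<Rightarrow> (nat \<Rightarrow> 'v list) \<Rightarrow> 'v set \<Rightarrow> nat" where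
  "congestion N p e = card {i. i < N \<and> e \<in> path_edges (p i)}"

definition player_cost :: "nat \<Rightarrow> (nat \<Rightarrow> 'v list) \<Rightarrow> nat \<Rightarrow> nat" where
  "player_cost N p i = (\<Sum>e\<in>path_edges (p i). 2 ^ congestion N p e)"

definition total_cost :: "'v set set \<Rightarrow> nat \<Rightarrow> (nat \<Rightarrow> 'v list) \<Rightarrow> nat" where
  "total_cost E N p = (\<Sum>e\<in>E. 2 ^ congestion N p e)"

end

theory Submission
  imports Defs
begin

lemma cong_cases:
  fixes p :: "nat \<Rightarrow> 'v list"
  assumes "i < N"
  shows "e \<in> path_edges (p i) \<Longrightarrow> e \<notin> path_edges q \<Longrightarrow> congestion N p e = Suc (congestion N (p(i := q)) e)"
    and "e \<notin> path_edges (p i) \<Longrightarrow> e \<in> path_edges q \<Longrightarrow> congestion N (p(i := q)) e = Suc (congestion N p e)"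
    and "(e \<in> path_edges (p i)) = (e \<in> path_edges q) \<Longrightarrow> congestion N (p(i := q)) e = congestion N p e"
proof -
  let ?S = "{j. j < N \<and> j \<noteq> i \<and> e \<in> path_edges (p j)}"
  have fin: "finite ?S" by simp
  have iS: "i \<notin> ?S" by simp
  have p1: "{j. j < N \<and> e \<in> path_edges (p j)} = (if e \<in> path_edges (p i) then insert i ?S else ?S)"
    using assms(1) by auto
  have p2: "{j. j < N \<and> e \<in> path_edges ((p(i := q)) j)} = (if e \<in> path_edges q then insert i ?S else ?S)"
    using assms(1) by auto
  show "e \<in> path_edges (p i) \<Longrightarrow> e \<notin> path_edges q \<Longrightarrow> congestion N p e = Suc (congestion N (p(i := q)) e)"
    unfolding congestion_def p1 p2 using fin iS by simp
  show "e \<notin> path_edges (p i) \<Longrightarrow> e \<in> path_edges q \<Longrightarrow> congestion N (p(i := q)) e = Suc (congestion N p e)"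
    unfolding congestion_def p1 p2 using fin iS by simp
  show "(e \<in> path_edges (p i)) = (e \<in> path_edges q) \<Longrightarrow> congestion N (p(i := q)) e = congestion N p e"
    unfolding congestion_def p1 p2 by simp
qed

theorem lemma1:
  fixes V :: "'v set" and E :: "'v set set" and N :: nat
    and u w :: "nat \<Rightarrow> 'v" and P :: "nat \<Rightarrow> 'v list set"
    and p :: "nat \<Rightarrow> 'v list" and i :: nat and q :: "'v list"
  assumes "graph V E"
    and "\<And>j. j < N \<Longrightarrow> P j \<subseteq> {xs. is_path V E (u j) (w j) xs}"
    and "\<And>j. j < N \<Longrightarrow> p j \<in> P j"
    and "i < N" and "q \<in> P i"
    and "player_cost N p i > player_cost N (p(i := q)) i"
  shows "total_cost E N p > total_cost E N (p(i := q))"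
proof -
  define p' where "p' = p(i := q)"
  define A where "A = path_edges (p i)"
  define B where "B = path_edges q"
  define c where "c = congestion N p"
  define c' where "c' = congestion N p'"
  have "E \<subseteq> Pow V" using assms(1) unfolding graph_def by auto
  moreover have "finite (Pow V)" using assms(1) unfolding graph_def by simp
  ultimately have finE: "finite E" using finite_subset by blast
  have AE: "A \<subseteq> E" using assms(2)[OF assms(4)] assms(3)[OF assms(4)]
    unfolding A_def is_path_def by auto
  have BE: "B \<subseteq> E" using assms(2)[OF assms(4)] assms(5)
    unfolding B_def is_path_def by auto
  have finA: "finite A" using AE finE finite_subset by blast
  have finB: "finite B" using BE finE finite_subset by blast
  have h1: "\<And>e. e \<in> A - B \<Longrightarrow> c e = Suc (c' e)"
    using cong_cases(1)[OF assms(4)] unfolding c_def c'_def p'_def A_def B_def by blast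
  have h2: "\<And>e. e \<in> B - A \<Longrightarrow> c' e = Suc (c e)"
    using cong_cases(2)[OF assms(4)] unfolding c_def c'_def p'_def A_def B_def by blast
  have h3: "\<And>e. e \<notin> A - B \<Longrightarrow> e \<notin> B - A \<Longrightarrow> c' e = c e"
    using cong_cases(3)[OF assms(4)] unfolding c_def c'_def p'_def A_def B_def by blast
  define X where "X = (\<Sum>e\<in>A - B. (2::nat) ^ c' e)"
  define Y where "Y = (\<Sum>e\<in>B - A. (2::nat) ^ c e)"
  define I where "I = (\<Sum>e\<in>A \<inter> B. (2::nat) ^ c e)"
  have I': "I = (\<Sum>e\<in>A \<inter> B. (2::nat) ^ c' e)"
    unfolding I_def by (rule sum.cong) (auto simp: h3)
  have XA: "(\<Sum>e\<in>A - B. (2::nat) ^ c e) = 2 * X"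
    unfolding X_def sum_distrib_left by (rule sum.cong) (auto simp: h1)
  have YB: "(\<Sum>e\<in>B - A. (2::nat) ^ c' e) = 2 * Y"
    unfolding Y_def sum_distrib_left by (rule sum.cong) (auto simp: h2)
  have pc1: "player_cost N p i = I + 2 * X"
  proof -
    have "(\<Sum>e\<in>A. (2::nat) ^ c e) = (\<Sum>e\<in>(A \<inter> B) \<union> (A - B). 2 ^ c e)"
      by (rule sum.cong) auto
    also have "\<dots> = (\<Sum>e\<in>A \<inter> B. 2 ^ c e) + (\<Sum>e\<in>A - B. 2 ^ c e)"
      by (rule sum.union_disjoint) (use finA in auto)
    finally have "(\<Sum>e\<in>A. (2::nat) ^ c e) = (\<Sum>e\<in>A \<inter> B. 2 ^ c e) + (\<Sum>e\<in>A - B. 2 ^ c e)" .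
    then show ?thesis unfolding player_cost_def A_def[symmetric] c_def[symmetric] I_def XA .
  qed
  have pc2: "player_cost N p' i = I + 2 * Y"
  proof -
    have "(\<Sum>e\<in>B. (2::nat) ^ c' e) = (\<Sum>e\<in>(A \<inter> B) \<union> (B - A). 2 ^ c' e)"
      by (rule sum.cong) auto
    also have "\<dots> = (\<Sum>e\<in>A \<inter> B. 2 ^ c' e) + (\<Sum>e\<in>B - A. 2 ^ c' e)"
      by (rule sum.union_disjoint) (use finA finB in auto)
    finally have "(\<Sum>e\<in>B. (2::nat) ^ c' e) = (\<Sum>e\<in>A \<inter> B. 2 ^ c' e) + (\<Sum>e\<in>B - A. 2 ^ c' e)" .
    moreover have "player_cost N p' i = (\<Sum>e\<in>B. (2::nat) ^ c' e)"
      unfolding player_cost_def B_def c'_def p'_def by simp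
    ultimately show ?thesis using I' YB by simp
  qed
  have XY: "X > Y" using assms(6) pc1 pc2 unfolding p'_def by simp
  define D where "D = (A - B) \<union> (B - A)"
  have DE: "D \<subseteq> E" unfolding D_def using AE BE by blast
  have finD: "finite D" using DE finE finite_subset by blast
  have t1: "total_cost E N p = (\<Sum>e\<in>E - D. 2 ^ c e) + (\<Sum>e\<in>D. 2 ^ c e)"
    unfolding total_cost_def c_def[symmetric] using sum.subset_diff[OF DE finE] .
  have t2: "total_cost E N p' = (\<Sum>e\<in>E - D. 2 ^ c' e) + (\<Sum>e\<in>D. 2 ^ c' e)"
    unfolding total_cost_def c'_def[symmetric] using sum.subset_diff[OF DE finE] .
  have r: "(\<Sum>e\<in>E - D. (2::nat) ^ c' e) = (\<Sum>e\<in>E - D. 2 ^ c e)"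
    by (rule sum.cong) (auto simp: D_def h3)
  have disj: "(A - B) \<inter> (B - A) = {}" by blast
  have d1: "(\<Sum>e\<in>D. (2::nat) ^ c e) = 2 * X + Y"
    unfolding D_def using sum.union_disjoint[OF _ _ disj, of "\<lambda>e. (2::nat) ^ c e"] finA finB XA Y_def by simp
  have d2: "(\<Sum>e\<in>D. (2::nat) ^ c' e) = X + 2 * Y"
    unfolding D_def using sum.union_disjoint[OF _ _ disj, of "\<lambda>e. (2::nat) ^ c' e"] finA finB YB X_def by simp
  show ?thesis using t1 t2 r d1 d2 XY unfolding p'_def by simp
qed

end
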